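(* Let $m,n\ge 1$. Under optimal play, the Sign Game on the complete bipartite graph $K_{m,n}$ is won by Player 2 when both $m$ and $n$ are odd, and results in a draw when at least one of $m,n$ is even.
   Context: The Sign Game on a finite simple undirected graph $G$: two players, Player P and Player N, alternate turns; the player who moves first is called Player 1 and the other Player 2 (either of P, N may be Player 1). On a turn, a player chooses a vertex of $G$ not yet assigned a value and assigns it $+1$ or $-1$. The game ends when every vertex has been assigned. The score of an edge $uv$ is the product of the values of $u$ and $v$, and the score $s(G)$ of the game is the sum of the scores of all edges. Player P wins if $s(G)>0$, Player N wins if $s(G)<0$, and the game is a draw if $s(G)=0$. "Under optimal play" means both players play optimally, each with primary goal of winning and secondary goal of at least drawing; the result is the outcome of this finite perfect-information game under such play. $K_{m,n}$ is the complete bipartite graph with parts of sizes $m$ and $n$, every vertex of one part adjacent to every vertex of the other and no other edges. *)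

theory Defs
  imports Main
begin

text \<open>A (partial) assignment is a function f :: 'v => int where
f v = 0 means "not yet assigned" and f v = 1 or f v = -1 is the assigned value.\<close>

definition sign_score :: "'v set set \<Rightarrow> ('v \<Rightarrow> int) \<Rightarrow> int" where
  "sign_score E f = (\<Sum>e\<in>E. \<Prod>v\<in>e. f v)"

text \<open>Minimax value of the game, measured as sgn of the final score
(1 = Player P wins, 0 = draw, -1 = Player N wins). k = number of moves left,
p = True iff it is Player P's turn. P maximises, N minimises; this is exactly
optimal play with primary goal winning and secondary goal drawing.\<close>

primrec sign_game_val :: "'v set \<Rightarrow> 'v set set \<Rightarrow> nat \<Rightarrow> ('v \<Rightarrow> int) \<Rightarrow> bool \<Rightarrow> int" where
  "sign_game_val V E 0 f p = sgn (sign_score E f)"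
| "sign_game_val V E (Suc k) f p =
     (let opts = {sign_game_val V E k (f(v := s)) (\<not> p) | v s. v \<in> V \<and> f v = 0 \<and> s \<in> {1, -1}}
      in if p then Max opts else Min opts)"

text \<open>Outcome under optimal play from the empty position; pfirst = True iff
Player P is Player 1 (moves first).\<close>

definition sign_game_outcome :: "'v set \<Rightarrow> 'v set set \<Rightarrow> bool \<Rightarrow> int" where
  "sign_game_outcome V E pfirst = sign_game_val V E (card V) (\<lambda>_. 0) pfirst"

definition Kmn_vertices :: "nat \<Rightarrow> nat \<Rightarrow> (nat + nat) set" where
  "Kmn_vertices m n = Inl ` {..<m} \<union> Inr ` {..<n}"

definition Kmn_edges :: "nat \<Rightarrow> nat \<Rightarrow> (nat + nat) set set" where
  "Kmn_edges m n = {{Inl i, Inr j} | i j. i < m \<and> j < n}"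

end

theory Submission imports Defs begin

fun W :: "nat \<Rightarrow> int \<Rightarrow> int \<Rightarrow> nat \<Rightarrow> nat \<Rightarrow> bool \<Rightarrow> int" where
  "W 0 a b ra rb p = sgn (a * b)"
| "W (Suc k) a b ra rb p =
    (let opts = (if ra > 0 then {W k (a+1) b (ra-1) rb (\<not> p), W k (a-1) b (ra-1) rb (\<not> p)} else {})
             \<union> (if rb > 0 then {W k a (b+1) ra (rb-1) (\<not> p), W k a (b-1) ra (rb-1) (\<not> p)} else {})
     in if p then Max opts else Min opts)"

definition V0 :: "int \<Rightarrow> int \<Rightarrow> bool \<Rightarrow> bool \<Rightarrow> bool \<Rightarrow> int" where
  "V0 a b oa ob p = W ((if oa then 1 else 0) + (if ob then 1 else 0)) a b (if oa then 1 else 0) (if ob then 1 else 0) p"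

lemma sgn_cases: "(x::int) \<le> -3 \<or> x = -2 \<or> x = -1 \<or> x = 0 \<or> x = 1 \<or> x = 2 \<or> x \<ge> 3" by linarith

lemma V0_ee: "V0 a b False False p = sgn a * sgn b"
  by (simp add: V0_def sgn_mult)

lemma V0_oe: "V0 a b True False p = (if p then max (sgn (a+1) * sgn b) (sgn (a-1) * sgn b) else min (sgn (a+1) * sgn b) (sgn (a-1) * sgn b))"
  by (simp add: V0_def sgn_mult Let_def)

lemma V0_eo: "V0 a b False True p = (if p then max (sgn a * sgn (b+1)) (sgn a * sgn (b-1)) else min (sgn a * sgn (b+1)) (sgn a * sgn (b-1)))"
  by (simp add: V0_def sgn_mult Let_def)

lemma V0_oo: "V0 a b True True p = (if p then
   max (max (min (sgn (a+1) * sgn (b+1)) (sgn (a+1) * sgn (b-1))) (min (sgn (a-1) * sgn (b+1)) (sgn (a-1) * sgn (b-1))))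
       (max (min (sgn (a+1) * sgn (b+1)) (sgn (a-1) * sgn (b+1))) (min (sgn (a+1) * sgn (b-1)) (sgn (a-1) * sgn (b-1))))
  else
   min (min (max (sgn (a+1) * sgn (b+1)) (sgn (a+1) * sgn (b-1))) (max (sgn (a-1) * sgn (b+1)) (sgn (a-1) * sgn (b-1))))
       (min (max (sgn (a+1) * sgn (b+1)) (sgn (a-1) * sgn (b+1))) (max (sgn (a+1) * sgn (b-1)) (sgn (a-1) * sgn (b-1)))))"
  by (simp add: V0_def sgn_mult Let_def numeral_eq_Suc max.commute min.commute max.left_commute min.left_commute max.assoc min.assoc)

lemmas V0_simps = V0_ee V0_oe V0_eo V0_oo

lemma int7_cases:
  fixes a :: int
  obtains "sgn (a-2) = -1" "sgn (a-1) = -1" "sgn a = -1" "sgn (a+1) = -1" "sgn (a+2) = -1"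
  | "sgn (a-2) = -1" "sgn (a-1) = -1" "sgn a = -1" "sgn (a+1) = -1" "sgn (a+2) = 0"
  | "sgn (a-2) = -1" "sgn (a-1) = -1" "sgn a = -1" "sgn (a+1) = 0" "sgn (a+2) = 1"
  | "sgn (a-2) = -1" "sgn (a-1) = -1" "sgn a = 0" "sgn (a+1) = 1" "sgn (a+2) = 1"
  | "sgn (a-2) = -1" "sgn (a-1) = 0" "sgn a = 1" "sgn (a+1) = 1" "sgn (a+2) = 1"
  | "sgn (a-2) = 0" "sgn (a-1) = 1" "sgn a = 1" "sgn (a+1) = 1" "sgn (a+2) = 1"
  | "sgn (a-2) = 1" "sgn (a-1) = 1" "sgn a = 1" "sgn (a+1) = 1" "sgn (a+2) = 1"
proof -
  consider "a \<le> -3" | "a = -2" | "a = -1" | "a = 0" | "a = 1" | "a = 2" | "a \<ge> 3" by linarith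
  then show ?thesis using that by cases (simp_all add: sgn_if)
qed

lemma arith_norm: "(a::int) + 1 + 1 = a + 2" "(a::int) - 1 - 1 = a - 2" "(a::int) + 1 - 1 = a" "(a::int) - 1 + 1 = a"
  by simp_all

lemma key: "k = ra + rb \<Longrightarrow> W k a b ra rb p = V0 a b (odd ra) (odd rb) p"
proof (induction k arbitrary: a b ra rb p)
  case 0
  then show ?case by (simp add: V0_ee sgn_mult)
next
  case (Suc k)
  consider "ra = 0" "rb > 0" | "ra > 0" "rb = 0" | "ra > 0" "rb > 0" using Suc.prems by linarith
  then show ?case
  proof cases
    case 1
    then have e: "odd (rb - 1) \<longleftrightarrow> \<not> odd rb" by (cases rb) auto
    have IHb: "\<And>a b q. W k a b ra (rb-1) q = V0 a b (odd ra) (\<not> odd rb) q"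
      proof -
      have kk: "k = ra + (rb - 1)" using Suc.prems 1 by simp
      show "\<And>a b q. ?thesis a b q" using Suc.IH[OF kk] e by (simp del: W.simps)
    qed
    show ?thesis
      apply (simp only: W.simps Let_def IHb)
      apply (insert 1)
      apply (cases p; cases "odd rb"; simp add: e)
      apply (simp_all only: V0_simps arith_norm if_True if_False simp_thms)
      apply (cases rule: int7_cases[of a]; cases rule: int7_cases[of b]; simp only:; simp)+
      done
  next
    case 2
    then have e: "odd (ra - 1) \<longleftrightarrow> \<not> odd ra" by (cases ra) auto
    have IHa: "\<And>a b q. W k a b (ra-1) rb q = V0 a b (\<not> odd ra) (odd rb) q"
      proof -
      have kk: "k = (ra - 1) + rb" using Suc.prems 2 by simp
      show "\<And>a b q. ?thesis a b q" using Suc.IH[OF kk] e by (simp del: W.simps)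
    qed
    show ?thesis
      apply (simp only: W.simps Let_def IHa)
      apply (insert 2)
      apply (cases p; cases "odd ra"; simp add: e)
      apply (simp_all only: V0_simps arith_norm if_True if_False simp_thms)
      apply (cases rule: int7_cases[of a]; cases rule: int7_cases[of b]; simp only:; simp)+
      done
  next
    case 3
    then have e: "odd (ra - 1) \<longleftrightarrow> \<not> odd ra" "odd (rb - 1) \<longleftrightarrow> \<not> odd rb" by (cases ra; cases rb; auto)+
    have IHa: "\<And>a b q. W k a b (ra-1) rb q = V0 a b (\<not> odd ra) (odd rb) q"
      proof -
      have kk: "k = (ra - 1) + rb" using Suc.prems 3 by simp
      show "\<And>a b q. ?thesis a b q" using Suc.IH[OF kk] e by (simp del: W.simps)
    qed
    have IHb: "\<And>a b q. W k a b ra (rb-1) q = V0 a b (odd ra) (\<not> odd rb) q"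
      proof -
      have kk: "k = ra + (rb - 1)" using Suc.prems 3 by simp
      show "\<And>a b q. ?thesis a b q" using Suc.IH[OF kk] e by (simp del: W.simps)
    qed
    show ?thesis
      apply (simp only: W.simps Let_def IHa IHb)
      apply (insert 3)
      apply (cases p; cases "odd ra"; cases "odd rb"; simp add: e)
      apply (simp_all only: V0_simps arith_norm if_True if_False simp_thms)
      apply (cases rule: int7_cases[of a]; cases rule: int7_cases[of b]; simp only:; simp)+
      done
  qed
qed


definition LA :: "nat \<Rightarrow> (nat + nat \<Rightarrow> int) \<Rightarrow> int" where "LA m f = (\<Sum>i<m. f (Inl i))"
definition RB :: "nat \<Rightarrow> (nat + nat \<Rightarrow> int) \<Rightarrow> int" where "RB n f = (\<Sum>j<n. f (Inr j))"
definition ZA :: "nat \<Rightarrow> (nat + nat \<Rightarrow> int) \<Rightarrow> nat" where "ZA m f = card {i. i < m \<and> f (Inl i) = 0}"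
definition ZB :: "nat \<Rightarrow> (nat + nat \<Rightarrow> int) \<Rightarrow> nat" where "ZB n f = card {j. j < n \<and> f (Inr j) = 0}"

lemma score: "sign_score (Kmn_edges m n) f = LA m f * RB n f"
proof -
  have E: "Kmn_edges m n = (\<lambda>(i,j). {Inl i, Inr j}) ` ({..<m} \<times> {..<n})"
    unfolding Kmn_edges_def by auto
  have inj: "inj_on (\<lambda>(i,j). {Inl i, Inr j}) ({..<m} \<times> {..<n})"
    by (auto simp: inj_on_def doubleton_eq_iff)
  have "sign_score (Kmn_edges m n) f = (\<Sum>(i,j)\<in>{..<m} \<times> {..<n}. f (Inl i) * f (Inr j))"
    unfolding sign_score_def E sum.reindex[OF inj] o_def by (intro sum.cong) auto
  also have "\<dots> = (\<Sum>i<m. \<Sum>j<n. f (Inl i) * f (Inr j))"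
    by (simp add: sum.cartesian_product)
  also have "\<dots> = LA m f * RB n f"
    by (simp add: LA_def RB_def sum_product)
  finally show ?thesis .
qed

lemma sum_upd0:
  assumes "finite S" "i \<in> S" "g i = (0::int)"
  shows "(\<Sum>j\<in>S. if j = i then s else g j) = sum g S + s"
proof -
  have "(\<Sum>j\<in>S. if j = i then s else g j) = (if i = i then s else g i) + (\<Sum>j\<in>S-{i}. if j = i then s else g j)"
    using assms by (rule_tac sum.remove) auto
  also have "(\<Sum>j\<in>S-{i}. if j = i then s else g j) = (\<Sum>j\<in>S-{i}. g j)"
    by (intro sum.cong) auto
  also have "(\<Sum>j\<in>S-{i}. g j) = sum g S - g i"
    using assms by (simp add: sum_diff1)
  finally show ?thesis using assms by simp
qed

lemma upd_Inl:
  assumes "i < m" "f (Inl i) = 0" "s \<noteq> 0"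
  shows "LA m (f(Inl i := s)) = LA m f + s" "RB n (f(Inl i := s)) = RB n f"
        "ZA m (f(Inl i := s)) = ZA m f - 1" "ZB n (f(Inl i := s)) = ZB n f" "ZA m f > 0"
proof -
  have "LA m (f(Inl i := s)) = (\<Sum>j<m. if j = i then s else f (Inl j))"
    unfolding LA_def by (intro sum.cong) auto
  also have "\<dots> = LA m f + s" unfolding LA_def using assms by (intro sum_upd0) auto
  finally show "LA m (f(Inl i := s)) = LA m f + s" .
  show "RB n (f(Inl i := s)) = RB n f" by (simp add: RB_def)
  show "ZB n (f(Inl i := s)) = ZB n f" by (simp add: ZB_def)
  have "{j. j < m \<and> (f(Inl i := s)) (Inl j) = 0} = {j. j < m \<and> f (Inl j) = 0} - {i}"
    using assms by auto
  moreover have "i \<in> {j. j < m \<and> f (Inl j) = 0}" using assms by auto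
  moreover have "finite {j. j < m \<and> f (Inl j) = 0}" by simp
  ultimately show "ZA m (f(Inl i := s)) = ZA m f - 1" "ZA m f > 0"
    unfolding ZA_def by (auto simp: card_gt_0_iff)
qed

lemma upd_Inr:
  assumes "j < n" "f (Inr j) = 0" "s \<noteq> 0"
  shows "RB n (f(Inr j := s)) = RB n f + s" "LA m (f(Inr j := s)) = LA m f"
        "ZB n (f(Inr j := s)) = ZB n f - 1" "ZA m (f(Inr j := s)) = ZA m f" "ZB n f > 0"
proof -
  have "RB n (f(Inr j := s)) = (\<Sum>i<n. if i = j then s else f (Inr i))"
    unfolding RB_def by (intro sum.cong) auto
  also have "\<dots> = RB n f + s" unfolding RB_def using assms by (intro sum_upd0) auto
  finally show "RB n (f(Inr j := s)) = RB n f + s" .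
  show "LA m (f(Inr j := s)) = LA m f" by (simp add: LA_def)
  show "ZA m (f(Inr j := s)) = ZA m f" by (simp add: ZA_def)
  have "{i. i < n \<and> (f(Inr j := s)) (Inr i) = 0} = {i. i < n \<and> f (Inr i) = 0} - {j}"
    using assms by auto
  moreover have "j \<in> {i. i < n \<and> f (Inr i) = 0}" using assms by auto
  moreover have "finite {i. i < n \<and> f (Inr i) = 0}" by simp
  ultimately show "ZB n (f(Inr j := s)) = ZB n f - 1" "ZB n f > 0"
    unfolding ZB_def by (auto simp: card_gt_0_iff)
qed

lemma ZA_pos: "ZA m f > 0 \<Longrightarrow> \<exists>i. i < m \<and> f (Inl i) = 0"
  unfolding ZA_def by (metis (mono_tags, lifting) Collect_empty_eq card.empty less_irrefl)
lemma ZB_pos: "ZB n f > 0 \<Longrightarrow> \<exists>j. j < n \<and> f (Inr j) = 0"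
  unfolding ZB_def by (metis (mono_tags, lifting) Collect_empty_eq card.empty less_irrefl)

lemma bridge:
  "k = ZA m f + ZB n f \<Longrightarrow>
   sign_game_val (Kmn_vertices m n) (Kmn_edges m n) k f p = W k (LA m f) (RB n f) (ZA m f) (ZB n f) p"
proof (induction k arbitrary: f p)
  case 0
  then show ?case by (simp add: score)
next
  case (Suc k)
  let ?V = "Kmn_vertices m n" and ?E = "Kmn_edges m n"
  let ?a = "LA m f" and ?b = "RB n f" and ?ra = "ZA m f" and ?rb = "ZB n f"
  have S: "{sign_game_val ?V ?E k (f(v := s)) (\<not> p) | v s. v \<in> ?V \<and> f v = 0 \<and> s \<in> {1, -1}}
     = (if ?ra > 0 then {W k (?a+1) ?b (?ra-1) ?rb (\<not> p), W k (?a-1) ?b (?ra-1) ?rb (\<not> p)} else {})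
       \<union> (if ?rb > 0 then {W k ?a (?b+1) ?ra (?rb-1) (\<not> p), W k ?a (?b-1) ?ra (?rb-1) (\<not> p)} else {})"
    (is "?L = ?R")
  proof
    show "?L \<subseteq> ?R"
    proof
      fix x assume "x \<in> ?L"
      then obtain v s where x: "x = sign_game_val ?V ?E k (f(v := s)) (\<not> p)"
        and v: "v \<in> ?V" "f v = 0" and s: "s \<in> {1, -1}" by blast
      have s0: "s \<noteq> 0" using s by auto
      from v(1) obtain i where "v = Inl i \<and> i < m \<or> v = Inr i \<and> i < n"
        unfolding Kmn_vertices_def by auto
      then show "x \<in> ?R"
      proof
        assume h: "v = Inl i \<and> i < m"
        note u = upd_Inl[where f=f, OF conjunct2[OF h] _ s0]
        have fi: "f (Inl i) = 0" using v h by simp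
        have kk: "k = ZA m (f(Inl i := s)) + ZB n (f(Inl i := s))"
          using Suc.prems u[OF fi] by simp
        have "x = W k (?a + s) ?b (?ra - 1) ?rb (\<not> p)"
          using h by (simp only: x Suc.IH[OF kk] u[OF fi])
        then show "x \<in> ?R" using s u(5)[OF fi] by auto
      next
        assume h: "v = Inr i \<and> i < n"
        note u = upd_Inr[where f=f, OF conjunct2[OF h] _ s0]
        have fi: "f (Inr i) = 0" using v h by simp
        have kk: "k = ZA m (f(Inr i := s)) + ZB n (f(Inr i := s))"
          using Suc.prems u[OF fi] by simp
        have "x = W k ?a (?b + s) ?ra (?rb - 1) (\<not> p)"
          using h by (simp only: x Suc.IH[OF kk] u[OF fi])
        then show "x \<in> ?R" using s u(5)[OF fi] by auto
      qed
    qed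
  next
    show "?R \<subseteq> ?L"
    proof -
      have A: "{W k (?a+1) ?b (?ra-1) ?rb (\<not> p), W k (?a-1) ?b (?ra-1) ?rb (\<not> p)} \<subseteq> ?L" if pos: "?ra > 0"
      proof -
        obtain i where i: "i < m" "f (Inl i) = 0" using ZA_pos[OF pos] by blast
        have vV: "Inl i \<in> ?V" using i by (simp add: Kmn_vertices_def)
        have "W k (?a + s) ?b (?ra - 1) ?rb (\<not> p) \<in> ?L" if s: "s \<in> {1, -1}" for s
        proof -
          have s0: "s \<noteq> 0" using s by auto
          note u = upd_Inl[where f=f, OF i s0]
          have kk: "k = ZA m (f(Inl i := s)) + ZB n (f(Inl i := s))"
            using Suc.prems u by simp
          have eq: "sign_game_val ?V ?E k (f(Inl i := s)) (\<not> p) = W k (?a + s) ?b (?ra - 1) ?rb (\<not> p)"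
            by (simp only: Suc.IH[OF kk] u)
          have mem: "sign_game_val ?V ?E k (f(Inl i := s)) (\<not> p) \<in> ?L" using vV i(2) s by blast
          show ?thesis using mem unfolding eq .
        qed
        from this[of 1] this[of "-1"] show ?thesis by simp
      qed
      have B: "{W k ?a (?b+1) ?ra (?rb-1) (\<not> p), W k ?a (?b-1) ?ra (?rb-1) (\<not> p)} \<subseteq> ?L" if pos: "?rb > 0"
      proof -
        obtain j where j: "j < n" "f (Inr j) = 0" using ZB_pos[OF pos] by blast
        have vV: "Inr j \<in> ?V" using j by (simp add: Kmn_vertices_def)
        have "W k ?a (?b + s) ?ra (?rb - 1) (\<not> p) \<in> ?L" if s: "s \<in> {1, -1}" for s
        proof -
          have s0: "s \<noteq> 0" using s by auto
          note u = upd_Inr[where f=f, OF j s0]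
          have kk: "k = ZA m (f(Inr j := s)) + ZB n (f(Inr j := s))"
            using Suc.prems u by simp
          have eq: "sign_game_val ?V ?E k (f(Inr j := s)) (\<not> p) = W k ?a (?b + s) ?ra (?rb - 1) (\<not> p)"
            by (simp only: Suc.IH[OF kk] u)
          have mem: "sign_game_val ?V ?E k (f(Inr j := s)) (\<not> p) \<in> ?L" using vV j(2) s by blast
          show ?thesis using mem unfolding eq .
        qed
        from this[of 1] this[of "-1"] show ?thesis by simp
      qed
      show ?thesis using A B by auto
    qed
  qed
  show ?case
    unfolding sign_game_val.simps W.simps Let_def S ..
qed


lemma outcome: "sign_game_outcome (Kmn_vertices m n) (Kmn_edges m n) p = V0 0 0 (odd m) (odd n) p"
proof -
  have c: "card (Kmn_vertices m n) = m + n"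
    unfolding Kmn_vertices_def
    by (subst card_Un_disjoint) (auto simp: card_image)
  have z: "ZA m (\<lambda>_. 0) = m" "ZB n (\<lambda>_. 0) = n" "LA m (\<lambda>_. 0) = 0" "RB n (\<lambda>_. 0) = 0"
    by (simp_all add: ZA_def ZB_def LA_def RB_def)
  have "sign_game_outcome (Kmn_vertices m n) (Kmn_edges m n) p = W (m + n) 0 0 m n p"
    unfolding sign_game_outcome_def c using bridge[of "m + n" m "\<lambda>_. 0" n p] z by simp
  also have "\<dots> = V0 0 0 (odd m) (odd n) p" by (rule key) simp
  finally show ?thesis .
qed

theorem theorem4:
  fixes m n :: nat
  assumes "m \<ge> 1" and "n \<ge> 1"
  shows "(odd m \<and> odd n \<longrightarrow>
            sign_game_outcome (Kmn_vertices m n) (Kmn_edges m n) True = -1 \<and>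
            sign_game_outcome (Kmn_vertices m n) (Kmn_edges m n) False = 1)
       \<and> (even m \<or> even n \<longrightarrow>
            sign_game_outcome (Kmn_vertices m n) (Kmn_edges m n) True = 0 \<and>
            sign_game_outcome (Kmn_vertices m n) (Kmn_edges m n) False = 0)"
  unfolding outcome
  by (cases "odd m"; cases "odd n") (simp_all add: V0_simps)

end
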